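(* Let $G$ be a finitely generated group and $H$ a subgroup of finite index in $G$. Then $\gamma_H^c\preceq\gamma_G^c$.
   Context: For a finitely generated group $G$ with a fixed finite generating set $S$, let $B(n)$ denote the ball of radius $n$ about the identity in the word metric induced by $S$. The conjugacy growth function is $\gamma_G^c(n)=\#\{\text{conjugacy classes } C \text{ of } G : C\cap B(n)\neq\emptyset\}$; for $H$ it is computed with respect to a finite generating set of $H$ and conjugacy in $H$. For functions $f,g:\mathbb N\to\mathbb N$, write $f\preceq g$ if there exist constants $C,D$ such that $f(n)\le C g(Dn)$ for all $n\in\mathbb N$. *)

theory Defs
  imports "HOL-Algebra.Algebra"
begin

fun word_ball :: "('a, 'b) monoid_scheme \<Rightarrow> 'a set \<Rightarrow> nat \<Rightarrow> 'a set" where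
  "word_ball G S 0 = {\<one>\<^bsub>G\<^esub>}"
| "word_ball G S (Suc n) = word_ball G S n \<union>
     {s \<otimes>\<^bsub>G\<^esub> x | s x. s \<in> S \<union> (\<lambda>t. inv\<^bsub>G\<^esub> t) ` S \<and> x \<in> word_ball G S n}"

definition finite_gen_set :: "('a, 'b) monoid_scheme \<Rightarrow> 'a set \<Rightarrow> bool" where
  "finite_gen_set G S \<longleftrightarrow> finite S \<and> S \<subseteq> carrier G \<and> generate G S = carrier G"

definition conj_class :: "('a, 'b) monoid_scheme \<Rightarrow> 'a \<Rightarrow> 'a set" where
  "conj_class G x = {g \<otimes>\<^bsub>G\<^esub> x \<otimes>\<^bsub>G\<^esub> inv\<^bsub>G\<^esub> g | g. g \<in> carrier G}"

definition conj_classes :: "('a, 'b) monoid_scheme \<Rightarrow> 'a set set" where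
  "conj_classes G = conj_class G ` carrier G"

definition conj_growth :: "('a, 'b) monoid_scheme \<Rightarrow> 'a set \<Rightarrow> nat \<Rightarrow> nat" where
  "conj_growth G S n = card {C \<in> conj_classes G. C \<inter> word_ball G S n \<noteq> {}}"

definition growth_preceq :: "(nat \<Rightarrow> nat) \<Rightarrow> (nat \<Rightarrow> nat) \<Rightarrow> bool" where
  "growth_preceq f g \<longleftrightarrow> (\<exists>C D::nat. \<forall>n. f n \<le> C * g (D * n))"

end

theory Submission
  imports Defs
begin

lemma conj_self:
  fixes K (structure)
  assumes "group K" "a \<in> carrier K"
  shows "a \<in> conj_class K a"
proof -
  interpret group K by fact
  have "\<one> \<otimes> a \<otimes> inv \<one> = a" using assms by simp
  thus ?thesis unfolding conj_class_def by force
qed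

lemma conj_sub:
  fixes K (structure)
  assumes "group K" "a \<in> carrier K"
  shows "conj_class K a \<subseteq> carrier K"
proof -
  interpret group K by fact
  show ?thesis unfolding conj_class_def using assms by auto
qed

lemma conj_eq:
  fixes K (structure)
  assumes "group K" "a \<in> carrier K" "b \<in> conj_class K a"
  shows "conj_class K b = conj_class K a"
proof -
  interpret group K by fact
  obtain g where g: "g \<in> carrier K" "b = g \<otimes> a \<otimes> inv g"
    using assms(3) unfolding conj_class_def by auto
  show ?thesis
  proof
    show "conj_class K b \<subseteq> conj_class K a"
    proof
      fix x assume "x \<in> conj_class K b"
      then obtain h where h: "h \<in> carrier K" "x = h \<otimes> b \<otimes> inv h"
        unfolding conj_class_def by auto
      have "x = (h \<otimes> g) \<otimes> a \<otimes> inv (h \<otimes> g)"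
        using g h assms(2) by (simp add: m_assoc inv_mult_group)
      thus "x \<in> conj_class K a" unfolding conj_class_def using g h by blast
    qed
  next
    show "conj_class K a \<subseteq> conj_class K b"
    proof
      fix x assume "x \<in> conj_class K a"
      then obtain h where h: "h \<in> carrier K" "x = h \<otimes> a \<otimes> inv h"
        unfolding conj_class_def by auto
      have cl: "\<And>u v. u \<in> carrier K \<Longrightarrow> v \<in> carrier K \<Longrightarrow> inv u \<otimes> (u \<otimes> v) = v"
        by (simp add: m_assoc[symmetric])
      have "(h \<otimes> inv g) \<otimes> b \<otimes> inv (h \<otimes> inv g) = x"
        using g h assms(2) by (simp add: m_assoc inv_mult_group cl)
      moreover have "h \<otimes> inv g \<in> carrier K" using g h by simp
      ultimately show "x \<in> conj_class K b" unfolding conj_class_def by blast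
    qed
  qed
qed

lemma ball_carrier:
  fixes K (structure)
  assumes "group K" "S \<subseteq> carrier K"
  shows "word_ball K S n \<subseteq> carrier K"
proof -
  interpret group K by fact
  show ?thesis using assms(2) by (induction n) auto
qed

lemma ball_finite:
  assumes "finite S"
  shows "finite (word_ball K S n)"
proof (induction n)
  case 0 then show ?case by simp
next
  case (Suc n)
  have "{s \<otimes>\<^bsub>K\<^esub> x | s x. s \<in> S \<union> (\<lambda>t. inv\<^bsub>K\<^esub> t) ` S \<and> x \<in> word_ball K S n}
     = (\<lambda>(s,x). s \<otimes>\<^bsub>K\<^esub> x) ` ((S \<union> (\<lambda>t. inv\<^bsub>K\<^esub> t) ` S) \<times> word_ball K S n)" by auto
  then show ?case using Suc assms by simp
qed

lemma ball_mono: "m \<le> n \<Longrightarrow> word_ball K S m \<subseteq> word_ball K S n"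
proof (induction n)
  case 0 then show ?case by simp
next
  case (Suc n) then show ?case by (cases "m = Suc n") auto
qed

lemma ball_mult:
  fixes K (structure)
  assumes "group K" "S \<subseteq> carrier K"
  shows "x \<in> word_ball K S m \<Longrightarrow> y \<in> word_ball K S n \<Longrightarrow> x \<otimes>\<^bsub>K\<^esub> y \<in> word_ball K S (m + n)"
proof (induction m arbitrary: x)
  case 0
  interpret group K by fact
  have "y \<in> carrier K" using ball_carrier[OF assms] 0 by blast
  then show ?case using 0 by simp
next
  case (Suc m)
  interpret group K by fact
  show ?case
  proof (cases "x \<in> word_ball K S m")
    case True
    then have "x \<otimes> y \<in> word_ball K S (m + n)" using Suc by blast
    then show ?thesis using ball_mono[of "m+n" "Suc m + n" K S] by auto
  next
    case False
    then obtain s x' where sx: "x = s \<otimes> x'" "s \<in> S \<union> (\<lambda>t. inv t) ` S" "x' \<in> word_ball K S m"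
      using Suc.prems by auto
    have sc: "s \<in> carrier K" using sx(2) assms(2) by auto
    have "x' \<in> carrier K" "y \<in> carrier K"
      using ball_carrier[OF assms] sx(3) Suc.prems(2) by blast+
    then have "x \<otimes> y = s \<otimes> (x' \<otimes> y)" using sx sc by (simp add: m_assoc)
    moreover have "x' \<otimes> y \<in> word_ball K S (m + n)" using Suc.IH sx(3) Suc.prems(2) by blast
    ultimately show ?thesis using sx(2) by auto
  qed
qed

lemma generate_ball:
  fixes K (structure)
  assumes "group K" "S \<subseteq> carrier K"
  shows "x \<in> generate K S \<Longrightarrow> \<exists>n. x \<in> word_ball K S n"
proof (induction rule: generate.induct)
  case one then show ?case by (intro exI[of _ 0]) simp
next
  case (incl h)
  interpret group K by fact
  have "h = h \<otimes> \<one>" using incl assms(2) by auto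
  then have "h \<in> word_ball K S 1" using incl by auto
  then show ?case by blast
next
  case (inv h)
  interpret group K by fact
  have "inv h = inv h \<otimes> \<one>" using inv assms(2) by auto
  then have "inv h \<in> word_ball K S 1" using inv by auto
  then show ?case by blast
next
  case (eng h1 h2)
  then show ?case using ball_mult[OF assms] by blast
qed

lemma card_fibers:
  assumes "f ` A \<subseteq> B" "finite B" "\<And>D. D \<in> B \<Longrightarrow> finite {C \<in> A. f C = D} \<and> card {C \<in> A. f C = D} \<le> k"
  shows "card A \<le> k * card B"
proof -
  have A: "A = (\<Union>D\<in>B. {C \<in> A. f C = D})" using assms(1) by auto
  have "card A \<le> (\<Sum>D\<in>B. card {C \<in> A. f C = D})"
    by (subst A) (rule card_UN_le[OF assms(2)])
  also have "\<dots> \<le> (\<Sum>D\<in>B. k)" by (rule sum_mono) (use assms(3) in blast)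
  finally show ?thesis by (simp add: mult.commute)
qed

lemma lemma1_aux:
  fixes G :: "('a, 'b) monoid_scheme" (structure) and S T :: "'a set" and H :: "'a set"
  assumes "group G"
    and "finite_gen_set G S"
    and "subgroup H G"
    and "finite (rcosets\<^bsub>G\<^esub> H)"
    and "finite_gen_set (G\<lparr>carrier := H\<rparr>) T"
  shows "growth_preceq (conj_growth (G\<lparr>carrier := H\<rparr>) T) (conj_growth G S)"
proof -
  interpret group G by fact
  define H' where "H' = G\<lparr>carrier := H\<rparr>"
  have gH: "group H'" unfolding H'_def using assms(3) by (rule subgroup_imp_group)
  have invH: "\<And>x. x \<in> H \<Longrightarrow> inv\<^bsub>H'\<^esub> x = inv x"
    unfolding H'_def using assms(3) by (rule m_inv_consistent)
  have HG: "H \<subseteq> carrier G" using assms(3) subgroup.subset by blast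
  have S: "finite S" "S \<subseteq> carrier G" "generate G S = carrier G"
    using assms(2) unfolding finite_gen_set_def by auto
  have T: "finite T" "T \<subseteq> H"
    using assms(5) unfolding finite_gen_set_def H'_def by auto
  have "\<exists>L. \<forall>t\<in>T. t \<in> word_ball G S L \<and> inv t \<in> word_ball G S L"
    using T
  proof (induction T rule: finite_induct)
    case empty then show ?case by simp
  next
    case (insert t F)
    then obtain L where L: "\<forall>u\<in>F. u \<in> word_ball G S L \<and> inv u \<in> word_ball G S L" by auto
    have tc: "t \<in> carrier G" "inv t \<in> carrier G" using insert HG by auto
    obtain a where a: "t \<in> word_ball G S a" using generate_ball[OF assms(1) S(2)] tc S(3) by blast
    obtain b where b: "inv t \<in> word_ball G S b" using generate_ball[OF assms(1) S(2)] tc S(3) by blast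
    have m: "\<And>m. m \<le> L + a + b \<Longrightarrow> word_ball G S m \<subseteq> word_ball G S (L + a + b)"
      by (rule ball_mono)
    show ?case
      apply (rule exI[of _ "L + a + b"])
      using L a b m[of L] m[of a] m[of b] by auto
  qed
  then obtain L where L: "\<And>t. t \<in> T \<Longrightarrow> t \<in> word_ball G S L \<and> inv t \<in> word_ball G S L" by auto
  have ballsub: "word_ball H' T n \<subseteq> word_ball G S (L * n)" for n
  proof (induction n)
    case 0 then show ?case by (simp add: H'_def)
  next
    case (Suc n)
    show ?case
    proof
      fix z assume "z \<in> word_ball H' T (Suc n)"
      then consider "z \<in> word_ball H' T n"
        | s x where "z = s \<otimes> x" "s \<in> T \<union> (\<lambda>t. inv\<^bsub>H'\<^esub> t) ` T" "x \<in> word_ball H' T n"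
        by (auto simp: H'_def)
      then show "z \<in> word_ball G S (L * Suc n)"
      proof cases
        case 1
        then show ?thesis using Suc ball_mono[of "L*n" "L * Suc n" G S] by auto
      next
        case 2
        have "s \<in> word_ball G S L" using 2(2) L invH T(2) by auto
        moreover have "x \<in> word_ball G S (L * n)" using Suc 2(3) by blast
        ultimately have "s \<otimes> x \<in> word_ball G S (L + L * n)"
          using ball_mult[OF assms(1) S(2)] by blast
        then show ?thesis using 2(1) by simp
      qed
    qed
  qed
  have ccH: "conj_class H' y \<subseteq> conj_class G y" if "y \<in> H" for y
  proof
    fix x assume "x \<in> conj_class H' y"
    then obtain g where "g \<in> H" "x = g \<otimes> y \<otimes> inv\<^bsub>H'\<^esub> g"
      unfolding conj_class_def by (auto simp: H'_def)
    then show "x \<in> conj_class G y" unfolding conj_class_def using invH HG by auto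
  qed
  have cH: "carrier H' = H" by (simp add: H'_def)
  define k where "k = card (rcosets H)"
  define f where "f C = conj_class G (SOME y. y \<in> C)" for C
  have repr: "(SOME y. y \<in> C) \<in> H \<and> C = conj_class H' (SOME y. y \<in> C)"
    if Cc: "C \<in> conj_classes H'" for C
  proof -
    obtain y0 where y0: "y0 \<in> H" "C = conj_class H' y0"
      using Cc unfolding conj_classes_def cH by blast
    have "y0 \<in> C" using conj_self[OF gH] y0 by (simp add: H'_def)
    then have c: "(SOME y. y \<in> C) \<in> C" by (rule someI)
    have "conj_class H' y0 \<subseteq> H" using conj_sub[OF gH] y0 by (simp add: H'_def)
    then have "(SOME y. y \<in> C) \<in> H" using c y0 by auto
    moreover have "conj_class H' (SOME y. y \<in> C) = C"
      using conj_eq[OF gH] c y0 by (simp add: H'_def)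
    ultimately show ?thesis by simp
  qed
  have main: "card {C \<in> conj_classes H'. C \<inter> word_ball H' T n \<noteq> {}}
      \<le> k * card {D \<in> conj_classes G. D \<inter> word_ball G S (L * n) \<noteq> {}}" for n
  proof (rule card_fibers[where f = f])
    show "f ` {C \<in> conj_classes H'. C \<inter> word_ball H' T n \<noteq> {}}
        \<subseteq> {D \<in> conj_classes G. D \<inter> word_ball G S (L * n) \<noteq> {}}"
    proof (rule subsetI)
      fix E assume "E \<in> f ` {C \<in> conj_classes H'. C \<inter> word_ball H' T n \<noteq> {}}"
      then obtain C z where E: "E = f C" and C: "C \<in> conj_classes H'" "z \<in> C" "z \<in> word_ball H' T n"
        by blast
      define c where "c = (SOME y. y \<in> C)"
      have c: "c \<in> H" "C = conj_class H' c" using repr[OF C(1)] unfolding c_def by auto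
      have "z \<in> f C" using C ccH c unfolding f_def c_def[symmetric] by auto
      moreover have "f C \<in> conj_classes G" unfolding f_def c_def[symmetric] conj_classes_def
        using c HG by auto
      moreover have "z \<in> word_ball G S (L * n)" using ballsub C(3) by blast
      ultimately show "E \<in> {D \<in> conj_classes G. D \<inter> word_ball G S (L * n) \<noteq> {}}" using E by auto
    qed
  next
    show "finite {D \<in> conj_classes G. D \<inter> word_ball G S (L * n) \<noteq> {}}"
    proof (rule finite_subset)
      show "{D \<in> conj_classes G. D \<inter> word_ball G S (L * n) \<noteq> {}}
          \<subseteq> conj_class G ` word_ball G S (L * n)"
      proof (rule subsetI)
        fix D assume "D \<in> {D \<in> conj_classes G. D \<inter> word_ball G S (L * n) \<noteq> {}}"
        then obtain x where D: "D \<in> conj_classes G" "x \<in> D" "x \<in> word_ball G S (L * n)" by blast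
        obtain a where a: "a \<in> carrier G" "D = conj_class G a"
          using D(1) unfolding conj_classes_def by auto
        have "D = conj_class G x" using conj_eq[OF assms(1) a(1)] D(2) a(2) by simp
        then show "D \<in> conj_class G ` word_ball G S (L * n)" using D(3) by blast
      qed
      show "finite (conj_class G ` word_ball G S (L * n))" using ball_finite[OF S(1)] by blast
    qed
  next
    fix D
    let ?F = "{C \<in> {C \<in> conj_classes H'. C \<inter> word_ball H' T n \<noteq> {}}. f C = D}"
    show "finite ?F \<and> card ?F \<le> k"
    proof (cases "?F = {}")
      case True show ?thesis unfolding True by simp
    next
      case False
      then obtain C0 where C0: "C0 \<in> conj_classes H'" "f C0 = D" by auto
      define c0 where "c0 = (SOME y. y \<in> C0)"
      have c0: "c0 \<in> H" "D = conj_class G c0" using repr[OF C0(1)] C0(2)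
        unfolding c0_def f_def by auto
      define r where "r M = (SOME r. r \<in> M)" for M :: "'a set"
      have sub: "?F \<subseteq> (\<lambda>M. conj_class H' (r M \<otimes> c0 \<otimes> inv (r M))) ` (rcosets H)"
      proof
        fix C assume CF: "C \<in> ?F"
        define c where "c = (SOME y. y \<in> C)"
        have c: "c \<in> H" "C = conj_class H' c" using repr CF unfolding c_def by auto
        have "conj_class G c = D" using CF unfolding f_def c_def by auto
        then have "c \<in> conj_class G c0" using conj_self[OF assms(1)] c c0 HG by auto
        then obtain g where g: "g \<in> carrier G" "c = g \<otimes> c0 \<otimes> inv g"
          unfolding conj_class_def by auto
        have M: "H #> g \<in> rcosets H" using g(1) unfolding RCOSETS_def by auto
        have "g \<in> H #> g" using g(1) assms(3) by (simp add: rcos_self)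
        then have "r (H #> g) \<in> H #> g" unfolding r_def by (rule someI)
        then obtain h0 where h0: "h0 \<in> H" "r (H #> g) = h0 \<otimes> g"
          unfolding r_coset_def by auto
        have h0c: "h0 \<in> carrier G" using h0 HG by auto
        have c0c: "c0 \<in> carrier G" using c0 HG by auto
        have eq: "r (H #> g) \<otimes> c0 \<otimes> inv (r (H #> g)) = h0 \<otimes> c \<otimes> inv h0"
          using h0 h0c g c0c by (simp add: m_assoc inv_mult_group)
        have "h0 \<otimes> c \<otimes> inv h0 \<in> conj_class H' c"
        proof -
          have "h0 \<otimes> c \<otimes> inv h0 = h0 \<otimes>\<^bsub>H'\<^esub> c \<otimes>\<^bsub>H'\<^esub> inv\<^bsub>H'\<^esub> h0"
            using invH[OF h0(1)] by (simp add: H'_def)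
          then show ?thesis unfolding conj_class_def cH using h0(1) by blast
        qed
        then have "conj_class H' (h0 \<otimes> c \<otimes> inv h0) = C"
          using conj_eq[OF gH] c by (simp add: H'_def)
        then show "C \<in> (\<lambda>M. conj_class H' (r M \<otimes> c0 \<otimes> inv (r M))) ` (rcosets H)"
          using M eq by force
      qed
      have "finite ?F" using finite_subset[OF sub] assms(4) by blast
      moreover have "card ?F \<le> k"
        using card_mono[OF _ sub] card_image_le[OF assms(4)] assms(4) unfolding k_def
        by (meson finite_imageI le_trans)
      ultimately show ?thesis by simp
    qed
  qed
  show ?thesis unfolding growth_preceq_def conj_growth_def H'_def[symmetric]
    using main by blast
qed


theorem lemma1:
  fixes G :: "('a, 'b) monoid_scheme" and S T :: "'a set" and H :: "'a set"
  assumes "group G"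
    and "finite_gen_set G S"
    and "subgroup H G"
    and "finite (rcosets\<^bsub>G\<^esub> H)"
    and "finite_gen_set (G\<lparr>carrier := H\<rparr>) T"
  shows "growth_preceq (conj_growth (G\<lparr>carrier := H\<rparr>) T) (conj_growth G S)"
  using lemma1_aux[OF assms] .

end
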